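(* There exists a constant $\eta>0$ such that for every line $H_1\in\mathcal H$ and every $R>0$, $$G(H_1):=\int_{\mathcal H^2}\mathbf 1\{c(H_1,H_2,H_3)\in B(0,R)\}\,\Lambda(\mathrm dH_2)\Lambda(\mathrm dH_3)\le \eta R^2.$$
   Context: $\mathcal H$ is the set of lines in $\mathbb{R}^2$, and $\Lambda$ is the translation- and rotation-invariant measure on $\mathcal H$ normalized so that the lines meeting the unit disk have measure $2$; equivalently $\int_{\mathcal H}f(H)\Lambda(\mathrm dH)=\int_{S^1}\int_0^\infty f(H(r,u))\,\mathrm dr\,\sigma(\mathrm du)$, where $H(r,u)$ is the line at distance $r$ from the origin with unit normal $u$, and $\sigma$ is the rotation-invariant measure on $S^1$ with $\sigma(S^1)=2$. For three lines $H_1,H_2,H_3$ in general position, $\Delta(H_1,H_2,H_3)$ denotes the unique triangle formed by them, and $c(H_1,H_2,H_3)$ is the incenter of this triangle (the integrand is defined for $\Lambda^2$-a.e. $(H_2,H_3)$). $B(0,R)$ is the closed disk of radius $R$ centered at the origin. *)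

theory Defs
  imports "HOL-Analysis.Analysis"
begin

type_synonym point = "real ^ 2"

definition line_of :: "real \<times> real \<Rightarrow> point set" where
  "line_of p = {x. x $ 1 * cos (snd p) + x $ 2 * sin (snd p) = fst p}"

definition is_line :: "point set \<Rightarrow> bool" where
  "is_line L \<longleftrightarrow> (\<exists>u r. norm u = 1 \<and> L = {x. inner x u = r})"

text \<open>The invariant measure Lambda on lines, in the parameters (r, t), r \<ge> 0,
  t \<in> [0, 2 pi); sigma = (1/pi) dt has total mass 2.\<close>
definition Lam :: "(real \<times> real) measure" where
  "Lam = density lborel (\<lambda>p. ennreal (indicator ({0..} \<times> {0..<2*pi}) p / pi))"

definition meet :: "point set \<Rightarrow> point set \<Rightarrow> point" where
  "meet L M = (THE x. x \<in> L \<and> x \<in> M)"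

definition general_position :: "point set \<Rightarrow> point set \<Rightarrow> point set \<Rightarrow> bool" where
  "general_position L1 L2 L3 \<longleftrightarrow>
     (\<exists>!x. x \<in> L1 \<and> x \<in> L2) \<and> (\<exists>!x. x \<in> L1 \<and> x \<in> L3) \<and> (\<exists>!x. x \<in> L2 \<and> x \<in> L3) \<and>
     meet L2 L3 \<noteq> meet L1 L3 \<and> meet L2 L3 \<noteq> meet L1 L2 \<and> meet L1 L3 \<noteq> meet L1 L2"

definition incenter :: "point set \<Rightarrow> point set \<Rightarrow> point set \<Rightarrow> point" where
  "incenter L1 L2 L3 =
     (let A = meet L2 L3; B = meet L1 L3; C = meet L1 L2;
          a = dist B C; b = dist A C; c = dist A B
      in (1 / (a + b + c)) *\<^sub>R (a *\<^sub>R A + b *\<^sub>R B + c *\<^sub>R C))"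

end

theory Submission
  imports Defs
begin

lemma norm2: "norm (x::real^2) = sqrt ((x$1)^2 + (x$2)^2)"
  by (simp add: norm_vec_def L2_set_def sum_2)

lemma inner2: "inner (x::real^2) y = x$1*y$1 + x$2*y$2"
  by (simp add: inner_vec_def sum_2)

lemma cross_lem:
  fixes w1 w2 z1 z2 p q :: real
  assumes "w1*p + w2*q = 0" "p^2+q^2 = 1"
  shows "sqrt (w1^2+w2^2) * \<bar>z1*p + z2*q\<bar> = \<bar>w1*z2 - w2*z1\<bar>"
proof -
  have e1: "w1^2+w2^2 = (w1*q - w2*p)^2"
  proof -
    have "(w1^2+w2^2)*(p^2+q^2) = (w1*p+w2*q)^2 + (w1*q - w2*p)^2" by algebra
    thus ?thesis using assms by simp
  qed
  have e2': "(w1*q - w2*p)*(z1*p+z2*q) - (w1*z2 - w2*z1)*(p^2+q^2) = -(w1*p+w2*q)*(z2*p - z1*q)"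
    by algebra
  have e2: "(w1*q - w2*p)*(z1*p+z2*q) - (w1*z2 - w2*z1) = -(w1*p+w2*q)*(z2*p - z1*q)"
    using e2' assms(2) by simp
  have "sqrt (w1^2+w2^2) = \<bar>w1*q - w2*p\<bar>" using e1 by simp
  then show ?thesis using e2 assms(1) by (simp add: abs_mult[symmetric])
qed

lemma divlem: "(d::real) \<noteq> 0 \<Longrightarrow> (x/d)*p + (y/d)*q - k = (x*p + y*q - d*k)/d"
  by (simp add: field_simps)

lemma key:
  fixes A B C :: "real^2" and p1 q1 k1 p2 q2 k2 :: real
  assumes n1: "p1^2+q1^2=1" and n2: "p2^2+q2^2=1"
  and B1: "B$1*p1+B$2*q1 = k1" and C1: "C$1*p1+C$2*q1 = k1"
  and A2: "A$1*p2+A$2*q2 = k2" and C2: "C$1*p2+C$2*q2 = k2"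
  and BC: "B \<noteq> C"
  shows "\<bar>((1/(dist B C + dist A C + dist A B)) *\<^sub>R (dist B C *\<^sub>R A + dist A C *\<^sub>R B + dist A B *\<^sub>R C))$1*p1
         + ((1/(dist B C + dist A C + dist A B)) *\<^sub>R (dist B C *\<^sub>R A + dist A C *\<^sub>R B + dist A B *\<^sub>R C))$2*q1 - k1\<bar>
       = \<bar>((1/(dist B C + dist A C + dist A B)) *\<^sub>R (dist B C *\<^sub>R A + dist A C *\<^sub>R B + dist A B *\<^sub>R C))$1*p2
         + ((1/(dist B C + dist A C + dist A B)) *\<^sub>R (dist B C *\<^sub>R A + dist A C *\<^sub>R B + dist A B *\<^sub>R C))$2*q2 - k2\<bar>"
proof -
  define a where "a = dist B C"
  define b where "b = dist A C"
  define c where "c = dist A B"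
  have apos: "a > 0" using BC by (simp add: a_def)
  have S: "a+b+c > 0" using apos by (simp add: b_def c_def add_pos_nonneg)
  have ea: "a = sqrt ((B$1-C$1)^2 + (B$2-C$2)^2)" by (simp add: a_def dist_norm norm2)
  have eb: "b = sqrt ((A$1-C$1)^2 + (A$2-C$2)^2)" by (simp add: b_def dist_norm norm2)
  have ca: "a * \<bar>(A$1-C$1)*p1 + (A$2-C$2)*q1\<bar> = \<bar>(B$1-C$1)*(A$2-C$2) - (B$2-C$2)*(A$1-C$1)\<bar>"
    unfolding ea by (rule cross_lem[OF _ n1]) (use B1 C1 in \<open>simp add: left_diff_distrib\<close>)
  have cb: "b * \<bar>(B$1-C$1)*p2 + (B$2-C$2)*q2\<bar> = \<bar>(A$1-C$1)*(B$2-C$2) - (A$2-C$2)*(B$1-C$1)\<bar>"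
    unfolding eb by (rule cross_lem[OF _ n2]) (use A2 C2 in \<open>simp add: left_diff_distrib\<close>)
  define I where "I = (1/(a+b+c)) *\<^sub>R (a *\<^sub>R A + b *\<^sub>R B + c *\<^sub>R C)"
  have I1: "I$1 = (a*A$1+b*B$1+c*C$1)/(a+b+c)" by (simp add: I_def)
  have I2: "I$2 = (a*A$2+b*B$2+c*C$2)/(a+b+c)" by (simp add: I_def)
  have g: "\<And>p q k. I$1*p+I$2*q - k = ((a*A$1+b*B$1+c*C$1)*p + (a*A$2+b*B$2+c*C$2)*q - (a+b+c)*k)/(a+b+c)"
    unfolding I1 I2 using S by (intro divlem) simp
  have k1: "(a+b+c)*k1 = a*(C$1*p1+C$2*q1) + b*(B$1*p1+B$2*q1) + c*(C$1*p1+C$2*q1)"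
    using B1 C1 by (simp add: algebra_simps)
  have k2: "(a+b+c)*k2 = a*(A$1*p2+A$2*q2) + b*(C$1*p2+C$2*q2) + c*(C$1*p2+C$2*q2)"
    using A2 C2 by (simp add: algebra_simps)
  have f1: "I$1*p1+I$2*q1 - k1 = a*((A$1-C$1)*p1 + (A$2-C$2)*q1)/(a+b+c)"
    unfolding g k1 by (simp add: algebra_simps)
  have f2: "I$1*p2+I$2*q2 - k2 = b*((B$1-C$1)*p2 + (B$2-C$2)*q2)/(a+b+c)"
    unfolding g k2 by (simp add: algebra_simps)
  have "\<bar>I$1*p1+I$2*q1 - k1\<bar> = \<bar>I$1*p2+I$2*q2 - k2\<bar>"
  proof -
    have x: "\<bar>(B$1-C$1)*(A$2-C$2) - (B$2-C$2)*(A$1-C$1)\<bar> = \<bar>(A$1-C$1)*(B$2-C$2) - (A$2-C$2)*(B$1-C$1)\<bar>"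
      by (simp add: mult.commute abs_minus_commute)
    have "a \<ge> 0" "b \<ge> 0" by (simp_all add: a_def b_def)
    then show ?thesis unfolding f1 f2 using S ca cb x by (simp add: abs_mult)
  qed
  then show ?thesis by (simp add: I_def a_def b_def c_def)
qed

lemma cs2: assumes "p^2+q^2 = (1::real)" shows "\<bar>(x::real^2)$1*p + x$2*q\<bar> \<le> norm x"
proof -
  have "(x$1*p + x$2*q)^2 + (x$1*q - x$2*p)^2 = ((x$1)^2 + (x$2)^2)*(p^2+q^2)" by algebra
  hence "\<bar>x$1*p + x$2*q\<bar>^2 \<le> (x$1)^2 + (x$2)^2" using assms
    by (simp add: power2_abs) (smt (verit) zero_le_power2)
  hence "\<bar>x$1*p + x$2*q\<bar> \<le> sqrt ((x$1)^2 + (x$2)^2)" by (rule real_le_rsqrt)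
  thus ?thesis by (simp add: norm2)
qed

lemma meet_in: "\<exists>!x. x \<in> L \<and> x \<in> M \<Longrightarrow> meet L M \<in> L \<and> meet L M \<in> M"
  unfolding meet_def by (rule theI')

lemma mem_line_of: "x \<in> line_of (r,t) \<longleftrightarrow> x$1 * cos t + x$2 * sin t = r"
  by (simp add: line_of_def)

lemma geo:
  fixes v :: "real^2" and s R :: real and p2 p3 :: "real \<times> real"
  assumes nv: "norm v = 1" and H1: "H1 = {x. inner x v = s}"
  and gp: "general_position H1 (line_of p2) (line_of p3)"
  and inc: "incenter H1 (line_of p2) (line_of p3) \<in> cball 0 R"
  shows "(\<bar>fst p2 - s\<bar> \<le> 2*R \<or> \<bar>fst p2 + s\<bar> \<le> 2*R) \<and> (\<bar>fst p3 - s\<bar> \<le> 2*R \<or> \<bar>fst p3 + s\<bar> \<le> 2*R)"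
proof -
  obtain r2 t2 where p2: "p2 = (r2,t2)" by (cases p2)
  obtain r3 t3 where p3: "p3 = (r3,t3)" by (cases p3)
  define L2 where "L2 = line_of p2"
  define L3 where "L3 = line_of p3"
  define A where "A = meet L2 L3"
  define B where "B = meet H1 L3"
  define C where "C = meet H1 L2"
  have m1: "\<And>x. x \<in> H1 \<longleftrightarrow> x$1* v$1 + x$2* v$2 = s" by (simp add: H1 inner2)
  have m2: "\<And>x. x \<in> L2 \<longleftrightarrow> x$1 * cos t2 + x$2 * sin t2 = r2" by (simp add: L2_def p2 mem_line_of)
  have m3: "\<And>x. x \<in> L3 \<longleftrightarrow> x$1 * cos t3 + x$2 * sin t3 = r3" by (simp add: L3_def p3 mem_line_of)
  have gp': "(\<exists>!x. x \<in> H1 \<and> x \<in> L2) \<and> (\<exists>!x. x \<in> H1 \<and> x \<in> L3) \<and> (\<exists>!x. x \<in> L2 \<and> x \<in> L3) \<and>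
     A \<noteq> B \<and> A \<noteq> C \<and> B \<noteq> C"
    using gp unfolding general_position_def L2_def L3_def A_def B_def C_def by simp
  have A: "A \<in> L2" "A \<in> L3" using meet_in[of L2 L3] gp' unfolding A_def by simp_all
  have B: "B \<in> H1" "B \<in> L3" using meet_in[of H1 L3] gp' unfolding B_def by simp_all
  have C: "C \<in> H1" "C \<in> L2" using meet_in[of H1 L2] gp' unfolding C_def by simp_all
  have nv2: "(v$1)^2 + (v$2)^2 = 1" using nv by (simp add: norm2)
  define I where "I = incenter H1 L2 L3"
  have Ie: "I = (1/(dist B C + dist A C + dist A B)) *\<^sub>R (dist B C *\<^sub>R A + dist A C *\<^sub>R B + dist A B *\<^sub>R C)"
    by (simp add: I_def incenter_def Let_def A_def B_def C_def)
  have Ie': "I = (1/(dist C B + dist A B + dist A C)) *\<^sub>R (dist C B *\<^sub>R A + dist A B *\<^sub>R C + dist A C *\<^sub>R B)"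
  proof -
    have s1: "dist C B + dist A B + dist A C = dist B C + dist A C + dist A B" by (simp add: dist_commute)
    have s2: "dist C B *\<^sub>R A + dist A B *\<^sub>R C + dist A C *\<^sub>R B = dist B C *\<^sub>R A + dist A C *\<^sub>R B + dist A B *\<^sub>R C"
      by (simp add: dist_commute algebra_simps)
    show ?thesis unfolding Ie s1 s2 by (rule refl)
  qed
  have e2: "\<bar>I$1 * v$1 + I$2 * v$2 - s\<bar> = \<bar>I$1 * cos t2 + I$2 * sin t2 - r2\<bar>"
    unfolding Ie
  proof (rule key[OF nv2 sin_cos_squared_add2[of t2]])
    show "B $ 1 * v $ 1 + B $ 2 * v $ 2 = s" using B(1) m1 by blast
    show "C $ 1 * v $ 1 + C $ 2 * v $ 2 = s" using C(1) m1 by blast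
    show "A $ 1 * cos t2 + A $ 2 * sin t2 = r2" using A(1) m2 by blast
    show "C $ 1 * cos t2 + C $ 2 * sin t2 = r2" using C(2) m2 by blast
    show "B \<noteq> C" using gp' by simp
  qed
  have e3: "\<bar>I$1 * v$1 + I$2 * v$2 - s\<bar> = \<bar>I$1 * cos t3 + I$2 * sin t3 - r3\<bar>"
    unfolding Ie'
  proof (rule key[OF nv2 sin_cos_squared_add2[of t3]])
    show "C $ 1 * v $ 1 + C $ 2 * v $ 2 = s" using C(1) m1 by blast
    show "B $ 1 * v $ 1 + B $ 2 * v $ 2 = s" using B(1) m1 by blast
    show "A $ 1 * cos t3 + A $ 2 * sin t3 = r3" using A(2) m3 by blast
    show "B $ 1 * cos t3 + B $ 2 * sin t3 = r3" using B(2) m3 by blast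
    show "C \<noteq> B" using gp' by blast
  qed
  have nI: "norm I \<le> R" using inc by (simp add: I_def L2_def L3_def)
  have b1: "\<bar>I$1 * v$1 + I$2 * v$2\<bar> \<le> R" using cs2[OF nv2, of I] nI by linarith
  have b2: "\<bar>I$1 * cos t2 + I$2 * sin t2\<bar> \<le> R" using cs2[OF sin_cos_squared_add2[of t2], of I] nI by linarith
  have b3: "\<bar>I$1 * cos t3 + I$2 * sin t3\<bar> \<le> R" using cs2[OF sin_cos_squared_add2[of t3], of I] nI by linarith
  have r2: "\<bar>r2 - s\<bar> \<le> 2*R \<or> \<bar>r2 + s\<bar> \<le> 2*R" using e2 b1 b2 by linarith
  have r3: "\<bar>r3 - s\<bar> \<le> 2*R \<or> \<bar>r3 + s\<bar> \<le> 2*R" using e3 b1 b3 by linarith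
  show ?thesis using r2 r3 by (simp add: p2 p3)
qed


lemma dens_meas: "(\<lambda>p::real\<times>real. indicator ({0..} \<times> {0..<2*pi}) p / pi :: real) \<in> borel_measurable borel"
proof -
  have "({0..} \<times> {0..<2*pi} :: (real \<times> real) set) \<in> sets borel"
    by (intro borel_Times) auto
  then show ?thesis by (intro borel_measurable_divide borel_measurable_indicator) auto
qed

lemma Lam_sf: "sigma_finite_measure Lam"
  unfolding Lam_def
  by (subst sigma_finite_measure.sigma_finite_iff_density_finite[OF lborel.sigma_finite_measure_axioms]) (auto intro: dens_meas)

lemma sets_Lam: "sets Lam = sets lborel" by (simp add: Lam_def)



lemma Lam_bound:
  fixes s R :: real
  assumes R: "R > 0"
  shows "emeasure Lam (({s-2*R..s+2*R} \<union> {-s-2*R..-s+2*R}) \<times> UNIV) \<le> ennreal (16*R)"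
proof -
  define J where "J = {s-2*R..s+2*R} \<union> {-s-2*R..-s+2*R}"
  have cJ: "closed J" unfolding J_def by (intro closed_Un closed_atLeastAtMost)
  have m1: "J \<times> UNIV \<in> sets lborel"
    unfolding sets_lborel by (rule borel_closed) (intro closed_Times cJ closed_UNIV)
  have m2: "J \<times> {0..2*pi} \<in> sets lborel"
    unfolding sets_lborel by (rule borel_closed) (intro closed_Times cJ closed_atLeastAtMost)
  have "emeasure Lam (J \<times> UNIV) = (\<integral>\<^sup>+x. ennreal (indicator ({0..} \<times> {0..<2*pi}) x / pi) * indicator (J \<times> UNIV) x \<partial>lborel)"
    unfolding Lam_def using m1 dens_meas by (subst emeasure_density) (auto simp: mult.commute)
  also have "\<dots> \<le> (\<integral>\<^sup>+x. ennreal (1/pi) * indicator (J \<times> {0..2*pi}) x \<partial>lborel)"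
    by (intro nn_integral_mono) (auto split: split_indicator)
  also have "\<dots> = ennreal (1/pi) * emeasure lborel (J \<times> {0..2*pi})"
    using m2 by (simp add: nn_integral_cmult_indicator)
  also have "emeasure lborel (J \<times> {0..2*pi}) = emeasure (lborel \<Otimes>\<^sub>M lborel) (J \<times> {0..2*pi})"
    by (simp add: lborel_prod)
  also have "\<dots> = emeasure lborel J * emeasure lborel {0..2*pi}"
    using cJ by (intro lborel.emeasure_pair_measure_Times) auto
  also have "emeasure lborel {0..2*pi} = ennreal (2*pi)" by simp
  also have "emeasure lborel J \<le> ennreal (8*R)"
  proof -
    have "emeasure lborel J \<le> emeasure lborel {s-2*R..s+2*R} + emeasure lborel {-s-2*R..-s+2*R}"
      unfolding J_def by (rule emeasure_subadditive) auto
    also have "\<dots> = ennreal (4*R) + ennreal (4*R)" using R by simp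
    also have "\<dots> = ennreal (8*R)" using R by (simp add: ennreal_plus[symmetric] del: ennreal_plus)
    finally show ?thesis .
  qed
  hence "ennreal (1/pi) * (emeasure lborel J * ennreal (2*pi)) \<le> ennreal (1/pi) * (ennreal (8*R) * ennreal (2*pi))"
    by (intro mult_left_mono mult_right_mono) auto
  also have "\<dots> = ennreal (16*R)"
    using R by (simp add: ennreal_mult[symmetric] del: ennreal_mult)
  finally show ?thesis unfolding J_def .
qed


theorem lemma3p2:
  shows "\<exists>\<eta>>0. \<forall>H1 (R::real). is_line H1 \<and> R > 0 \<longrightarrow>
    (\<integral>\<^sup>+ pq. indicator {pq. general_position H1 (line_of (fst pq)) (line_of (snd pq)) \<and>
                 incenter H1 (line_of (fst pq)) (line_of (snd pq)) \<in> cball 0 R} pq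
       \<partial>(Lam \<Otimes>\<^sub>M Lam)) \<le> ennreal (\<eta> * R\<^sup>2)"
proof (intro exI[of _ 256] conjI allI impI)
  show "(0::real) < 256" by simp
  fix H1 and R :: real
  assume asm: "is_line H1 \<and> R > 0"
  then have R: "R > 0" by simp
  obtain v s where nv: "norm v = 1" and H1: "H1 = {x. inner x v = s}"
    using asm unfolding is_line_def by blast
  define S where "S = ({s-2*R..s+2*R} \<union> {-s-2*R..-s+2*R}) \<times> (UNIV :: real set)"
  define X where "X = {pq. general_position H1 (line_of (fst pq)) (line_of (snd pq)) \<and>
                 incenter H1 (line_of (fst pq)) (line_of (snd pq)) \<in> cball 0 R}"
  have XS: "X \<subseteq> S \<times> S"
  proof
    fix pq assume "pq \<in> X"
    then have "(\<bar>fst (fst pq) - s\<bar> \<le> 2*R \<or> \<bar>fst (fst pq) + s\<bar> \<le> 2*R) \<and>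
               (\<bar>fst (snd pq) - s\<bar> \<le> 2*R \<or> \<bar>fst (snd pq) + s\<bar> \<le> 2*R)"
      unfolding X_def by (intro geo[OF nv H1]) auto
    then show "pq \<in> S \<times> S" unfolding S_def by (cases pq) (auto simp: abs_le_iff)
  qed
  have cS: "closed ({s-2*R..s+2*R} \<union> {-s-2*R..-s+2*R})" by (intro closed_Un closed_atLeastAtMost)
  have mS: "S \<in> sets Lam"
    unfolding sets_Lam sets_lborel S_def by (rule borel_closed) (intro closed_Times cS closed_UNIV)
  interpret Lsf: sigma_finite_measure Lam by (rule Lam_sf)
  have "(\<integral>\<^sup>+ pq. indicator X pq \<partial>(Lam \<Otimes>\<^sub>M Lam)) \<le> (\<integral>\<^sup>+ pq. indicator (S \<times> S) pq \<partial>(Lam \<Otimes>\<^sub>M Lam))"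
    using XS by (intro nn_integral_mono) (auto split: split_indicator)
  also have "\<dots> = emeasure (Lam \<Otimes>\<^sub>M Lam) (S \<times> S)"
    using mS by (intro nn_integral_indicator) auto
  also have "\<dots> = emeasure Lam S * emeasure Lam S"
    using mS by (rule Lsf.emeasure_pair_measure_Times) (rule mS)
  also have "\<dots> \<le> ennreal (16*R) * ennreal (16*R)"
    using Lam_bound[OF R, of s] unfolding S_def by (intro mult_mono) auto
  also have "\<dots> = ennreal (256 * R\<^sup>2)"
    using R by (simp add: ennreal_mult[symmetric] power2_eq_square del: ennreal_mult)
  finally show "(\<integral>\<^sup>+ pq. indicator {pq. general_position H1 (line_of (fst pq)) (line_of (snd pq)) \<and>
                 incenter H1 (line_of (fst pq)) (line_of (snd pq)) \<in> cball 0 R} pq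
       \<partial>(Lam \<Otimes>\<^sub>M Lam)) \<le> ennreal (256 * R\<^sup>2)" unfolding X_def .
qed

end
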